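(* For all $n\geq 3$, the center of $\mathcal{BR}(\mathfrak{S}_n)$ equals the submonoid $\{(1,J)\mid J \text{ boxed}\}$ generated by $e_1,\dots,e_{n-1}$, which is isomorphic to the monoid $\mathcal{C}_n$ of compositions of $n$.
   Context: $\mathfrak{C}_n$ is the partition monoid: set partitions of $[2n]$ (top points $1,\dots,n$, bottom points $n+1,\dots,2n$) with concatenation product. $I\preceq J$ means each block of $J$ is a union of blocks of $I$. $\mathfrak{S}_n\subseteq\mathfrak{C}_n$ consists of the partitions with all blocks of the form $\{i,n+j\}$; $1=\{\{i,n+i\}\}$. A set partition $J$ of $[2n]$ is boxed if $1\preceq J$ and the restriction of $J$ to $[n]$ has all blocks intervals. $\mathcal{BR}(\mathfrak{S}_n)$ is the set of pairs $(I,J)$ with $I\in\mathfrak{S}_n$, $J$ boxed, $I\preceq J$, with componentwise concatenation product. $e_i=(1,b_i)$, where $b_i$ merges the blocks $\{i,n+i\}$ and $\{i+1,n+i+1\}$ of $1$. $\mathcal{C}_n$ is the set of compositions of $n$ with positive parts, with product the finest common coarsening (join), where $\mu$ is finer than $\mu'$ if $\mu'$ is obtained by adding consecutive parts of $\mu$; boxed partitions correspond to compositions via the sizes of their blocks halved. *)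

theory Defs
  imports "HOL-Library.Disjoint_Sets" "HOL-Algebra.Group"
begin

text \<open>Points: top points 1..n, bottom points n+1..2n.\<close>

definition set_part :: "nat \<Rightarrow> nat set set \<Rightarrow> bool" where
  "set_part n P \<longleftrightarrow> partition_on {1..2*n} P"

definition block_rel :: "nat set set \<Rightarrow> (nat \<times> nat) set" where
  "block_rel P = {(x,y). \<exists>B\<in>P. x \<in> B \<and> y \<in> B}"

text \<open>Concatenation: P on points 1..2n (its bottom becomes the middle row n+1..2n),
  Q shifted by n (top = middle row, bottom = 2n+1..3n); take connected components,
  drop the middle row and relabel the bottom row back to n+1..2n.\<close>

definition concat_part :: "nat \<Rightarrow> nat set set \<Rightarrow> nat set set \<Rightarrow> nat set set" where
  "concat_part n P Q =
    (let R = (block_rel P \<union> block_rel ((\<lambda>B. (\<lambda>x. x + n) ` B) ` Q))\<^sup>*;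
         outer = {1..n} \<union> {2*n+1..3*n};
         g = (\<lambda>x. if x \<le> n then x else x - n)
     in {g ` (R `` {x} \<inter> outer) | x. x \<in> outer})"

definition finer :: "nat set set \<Rightarrow> nat set set \<Rightarrow> bool" where
  "finer I J \<longleftrightarrow> (\<forall>B\<in>J. \<exists>S\<subseteq>I. B = \<Union>S)"

definition one_part :: "nat \<Rightarrow> nat set set" where
  "one_part n = {{i, n+i} | i. i \<in> {1..n}}"

definition perm_part :: "nat \<Rightarrow> nat set set \<Rightarrow> bool" where
  "perm_part n P \<longleftrightarrow> set_part n P \<and> (\<forall>B\<in>P. \<exists>i\<in>{1..n}. \<exists>j\<in>{1..n}. B = {i, n+j})"

definition boxed :: "nat \<Rightarrow> nat set set \<Rightarrow> bool" where
  "boxed n J \<longleftrightarrow> set_part n J \<and> finer (one_part n) J \<and>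
     (\<forall>B\<in>J. \<exists>a b. B \<inter> {1..n} = {a..b})"

definition BR :: "nat \<Rightarrow> (nat set set \<times> nat set set) set" where
  "BR n = {(I,J). perm_part n I \<and> boxed n J \<and> finer I J}"

definition BR_mult :: "nat \<Rightarrow> (nat set set \<times> nat set set) \<Rightarrow> (nat set set \<times> nat set set)
    \<Rightarrow> (nat set set \<times> nat set set)" where
  "BR_mult n x y = (concat_part n (fst x) (fst y), concat_part n (snd x) (snd y))"

definition BR_monoid :: "nat \<Rightarrow> (nat set set \<times> nat set set) monoid" where
  "BR_monoid n = \<lparr>carrier = BR n, mult = BR_mult n, one = (one_part n, one_part n)\<rparr>"

definition BR_center :: "nat \<Rightarrow> (nat set set \<times> nat set set) set" where
  "BR_center n = {x \<in> BR n. \<forall>y\<in>BR n. BR_mult n x y = BR_mult n y x}"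

definition b_part :: "nat \<Rightarrow> nat \<Rightarrow> nat set set" where
  "b_part n i = insert {i, i+1, n+i, n+i+1} (one_part n - {{i, n+i}, {i+1, n+i+1}})"

definition e_gen :: "nat \<Rightarrow> nat \<Rightarrow> (nat set set \<times> nat set set)" where
  "e_gen n i = (one_part n, b_part n i)"

inductive_set gen_submonoid :: "nat \<Rightarrow> (nat set set \<times> nat set set) set" for n where
  gen_one: "(one_part n, one_part n) \<in> gen_submonoid n"
| gen_e: "1 \<le> i \<Longrightarrow> i \<le> n - 1 \<Longrightarrow> e_gen n i \<in> gen_submonoid n"
| gen_mult: "x \<in> gen_submonoid n \<Longrightarrow> y \<in> gen_submonoid n \<Longrightarrow> BR_mult n x y \<in> gen_submonoid n"

definition compositions :: "nat \<Rightarrow> nat list set" where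
  "compositions n = {mu. (\<forall>p\<in>set mu. 0 < p) \<and> sum_list mu = n}"

definition coarsens :: "nat list \<Rightarrow> nat list \<Rightarrow> bool" where
  "coarsens mu mu' \<longleftrightarrow> (\<exists>xss. mu = concat xss \<and> (\<forall>xs\<in>set xss. xs \<noteq> []) \<and> mu' = map sum_list xss)"

definition comp_join :: "nat list \<Rightarrow> nat list \<Rightarrow> nat list" where
  "comp_join mu nu = (THE rho. coarsens mu rho \<and> coarsens nu rho \<and>
      (\<forall>sigma. coarsens mu sigma \<and> coarsens nu sigma \<longrightarrow> coarsens rho sigma))"

definition comp_monoid :: "nat \<Rightarrow> nat list monoid" where
  "comp_monoid n = \<lparr>carrier = compositions n, mult = comp_join, one = replicate n 1\<rparr>"

end

theory Submission
  imports Defs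
begin

fun psums :: "nat list \<Rightarrow> nat set" where
  "psums [] = {}"
| "psums (a # l) = insert a ((\<lambda>s. a + s) ` psums l)"

definition pos :: "nat list \<Rightarrow> bool" where "pos l \<longleftrightarrow> (\<forall>p\<in>set l. 0 < p)"

lemma pos_simps[simp]: "pos []" "pos (a # l) \<longleftrightarrow> 0 < a \<and> pos l" "pos (xs @ ys) \<longleftrightarrow> pos xs \<and> pos ys"
  by (auto simp: pos_def)

lemma psums_append: "psums (xs @ ys) = psums xs \<union> (\<lambda>s. sum_list xs + s) ` psums ys"
  by (induction xs) (auto simp: image_image add.assoc)

lemma psums_pos: "pos l \<Longrightarrow> s \<in> psums l \<Longrightarrow> 0 < s"
  by (induction l arbitrary: s) auto

lemma psums_le: "s \<in> psums l \<Longrightarrow> s \<le> sum_list l"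
  by (induction l arbitrary: s) auto

lemma psums_sum: "l \<noteq> [] \<Longrightarrow> sum_list l \<in> psums l"
proof (induction l)
  case Nil
  then show ?case by simp
next
  case (Cons a l)
  show ?case
  proof (cases "l = []")
    case True
    then show ?thesis by simp
  next
    case False
    then have "sum_list l \<in> psums l" using Cons by simp
    then show ?thesis by simp
  qed
qed

lemma psums_empty: "psums l = {} \<longleftrightarrow> l = []"
  by (cases l) auto

lemma psums_inj: "pos xs \<Longrightarrow> pos ys \<Longrightarrow> psums xs = psums ys \<Longrightarrow> xs = ys"
proof (induction xs arbitrary: ys)
  case Nil
  then show ?case by (cases ys) auto
next
  case (Cons a xs)
  have "ys \<noteq> []" using Cons(4) by auto
  then obtain b ys' where ys: "ys = b # ys'" by (cases ys) auto
  have "a \<in> psums ys" using Cons(4)[symmetric] by simp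
  then have ab: "b \<le> a" using ys by auto
  have "b \<in> psums (a # xs)" using Cons ys by simp
  then have "a \<le> b" by auto
  with ab have "a = b" by simp
  have pa: "\<forall>s\<in>psums xs. 0 < s" using psums_pos[of xs] Cons(2) by simp
  have pb: "\<forall>s\<in>psums ys'. 0 < s" using psums_pos[of ys'] Cons(3) ys by simp
  have "(\<lambda>s. a + s) ` psums xs = (\<lambda>s. a + s) ` psums ys'"
  proof -
    have e: "insert a ((\<lambda>s. a + s) ` psums xs) = insert a ((\<lambda>s. a + s) ` psums ys')"
      using Cons(4) ys \<open>a = b\<close> by simp
    have "a \<notin> (\<lambda>s. a + s) ` psums xs" using pa by auto
    moreover have "a \<notin> (\<lambda>s. a + s) ` psums ys'" using pb by auto
    ultimately show ?thesis using e by (metis insert_ident)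
  qed
  then have "psums xs = psums ys'" by (simp add: inj_image_eq_iff)
  then have "xs = ys'" using Cons ys by simp
  then show ?case using ys \<open>a = b\<close> by simp
qed

fun diffs :: "nat \<Rightarrow> nat list \<Rightarrow> nat list" where
  "diffs p [] = []"
| "diffs p (x # xs) = (x - p) # diffs x xs"

lemma diffs_psums: "sorted_wrt (<) xs \<Longrightarrow> (\<forall>x\<in>set xs. p < x) \<Longrightarrow>
    psums (diffs p xs) = (\<lambda>s. s - p) ` set xs \<and> pos (diffs p xs)"
proof (induction xs arbitrary: p)
  case Nil
  then show ?case by simp
next
  case (Cons x xs)
  then have IH: "psums (diffs x xs) = (\<lambda>s. s - x) ` set xs \<and> pos (diffs x xs)" by simp
  have "(\<lambda>s. x - p + s) ` (\<lambda>s. s - x) ` set xs = (\<lambda>s. s - p) ` set xs"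
    using Cons(2,3) by (force simp: image_image intro!: image_cong)
  then show ?case using IH Cons(3) by simp
qed

definition comp_of :: "nat set \<Rightarrow> nat list" where
  "comp_of E = diffs 0 (sorted_list_of_set E)"

lemma comp_of: "finite E \<Longrightarrow> 0 \<notin> E \<Longrightarrow> psums (comp_of E) = E \<and> pos (comp_of E)"
proof -
  assume f: "finite E" and z: "0 \<notin> E"
  have "sorted_wrt (<) (sorted_list_of_set E)" by simp
  moreover have "\<forall>x\<in>set (sorted_list_of_set E). 0 < x" using f z by (metis gr0I set_sorted_list_of_set)
  ultimately show ?thesis using diffs_psums[of "sorted_list_of_set E" 0] f
    unfolding comp_of_def by simp
qed

lemma coarsens_aux: "\<forall>xs\<in>set xss. xs \<noteq> [] \<Longrightarrow> pos (concat xss) \<Longrightarrow>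
   pos (map sum_list xss) \<and> sum_list (map sum_list xss) = sum_list (concat xss) \<and>
   psums (map sum_list xss) \<subseteq> psums (concat xss)"
proof (induction xss)
  case Nil
  then show ?case by simp
next
  case (Cons xs xss)
  then have IH: "pos (map sum_list xss) \<and> sum_list (map sum_list xss) = sum_list (concat xss) \<and>
   psums (map sum_list xss) \<subseteq> psums (concat xss)" by simp
  have ne: "xs \<noteq> []" using Cons by simp
  have "pos xs" using Cons by simp
  then have "0 < sum_list xs" using ne psums_pos psums_sum by blast
  moreover have "sum_list xs \<in> psums xs" using ne psums_sum by blast
  ultimately show ?case using IH by (auto simp: psums_append)
qed

lemma coarsens_imp: "coarsens mu nu \<Longrightarrow> pos mu \<Longrightarrow>
    pos nu \<and> sum_list nu = sum_list mu \<and> psums nu \<subseteq> psums mu"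
  unfolding coarsens_def using coarsens_aux by blast

lemma split_psums: "s \<in> psums mu \<Longrightarrow> \<exists>m1 m2. mu = m1 @ m2 \<and> m1 \<noteq> [] \<and> sum_list m1 = s"
proof (induction mu arbitrary: s)
  case Nil
  then show ?case by simp
next
  case (Cons a mu)
  show ?case
  proof (cases "s = a")
    case True
    then show ?thesis by (intro exI[of _ "[a]"] exI[of _ mu]) simp
  next
    case False
    then obtain t where "t \<in> psums mu" "s = a + t" using Cons by auto
    then obtain m1 m2 where "mu = m1 @ m2" "sum_list m1 = t" using Cons by blast
    then show ?thesis using \<open>s = a + t\<close> by (intro exI[of _ "a # m1"] exI[of _ m2]) simp
  qed
qed

lemma imp_coarsens: "pos mu \<Longrightarrow> pos nu \<Longrightarrow> sum_list mu = sum_list nu \<Longrightarrow>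
   psums nu \<subseteq> psums mu \<Longrightarrow> coarsens mu nu"
proof (induction nu arbitrary: mu)
  case Nil
  then have "mu = []"
    by (metis psums_empty psums_pos psums_sum sum_list.Nil less_irrefl)
  then show ?case unfolding coarsens_def by (intro exI[of _ "[]"]) simp
next
  case (Cons b nu)
  then have "b \<in> psums mu" by auto
  then obtain m1 m2 where mu: "mu = m1 @ m2" "m1 \<noteq> []" "sum_list m1 = b"
    using split_psums by blast
  have "psums nu \<subseteq> psums m2"
  proof
    fix s assume s: "s \<in> psums nu"
    then have "0 < s" using Cons psums_pos by simp
    have "b + s \<in> psums mu" using Cons s by auto
    then have "b + s \<in> psums m1 \<or> b + s \<in> (\<lambda>t. b + t) ` psums m2"
      using mu by (simp add: psums_append)
    moreover have "b + s \<notin> psums m1" using psums_le \<open>0 < s\<close> mu by fastforce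
    ultimately show "s \<in> psums m2" by auto
  qed
  moreover have "sum_list m2 = sum_list nu" using Cons(4) mu by simp
  moreover have "pos m2" using Cons mu by simp
  moreover have "pos nu" using Cons(3) by simp
  ultimately have "coarsens m2 nu" using Cons.IH[of m2] by blast
  then obtain xss where x: "m2 = concat xss" "\<forall>xs\<in>set xss. xs \<noteq> []" "nu = map sum_list xss"
    unfolding coarsens_def by blast
  show ?case unfolding coarsens_def
    by (intro exI[of _ "m1 # xss"]) (use x mu in auto)
qed

lemma comp_join_eq:
  assumes "pos mu" "pos nu" "pos rho" "sum_list mu = sum_list nu" "sum_list rho = sum_list mu"
    "psums rho = psums mu \<inter> psums nu"
  shows "comp_join mu nu = rho"
  unfolding comp_join_def
proof (rule the_equality)
  show "coarsens mu rho \<and> coarsens nu rho \<and>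
    (\<forall>sigma. coarsens mu sigma \<and> coarsens nu sigma \<longrightarrow> coarsens rho sigma)"
  proof (intro conjI allI impI)
    show "coarsens mu rho" "coarsens nu rho" using assms by (auto intro!: imp_coarsens)
  next
    fix sigma assume s: "coarsens mu sigma \<and> coarsens nu sigma"
    then have "pos sigma" "sum_list sigma = sum_list mu" "psums sigma \<subseteq> psums mu" "psums sigma \<subseteq> psums nu"
      using coarsens_imp assms by blast+
    then show "coarsens rho sigma" using assms imp_coarsens by simp
  qed
next
  fix r assume r: "coarsens mu r \<and> coarsens nu r \<and>
    (\<forall>sigma. coarsens mu sigma \<and> coarsens nu sigma \<longrightarrow> coarsens r sigma)"
  have "coarsens mu rho" "coarsens nu rho" using assms by (auto intro!: imp_coarsens)
  then have rr: "coarsens r rho" using r by blast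
  have c1: "pos r \<and> sum_list r = sum_list mu \<and> psums r \<subseteq> psums mu"
    using r coarsens_imp[of mu r] assms(1) by blast
  have c2: "psums r \<subseteq> psums nu"
    using r coarsens_imp[of nu r] assms(2) by blast
  have "psums rho \<subseteq> psums r" using coarsens_imp[OF rr] c1 by blast
  moreover have "psums r \<subseteq> psums rho" using c1 c2 assms(6) by blast
  ultimately have "psums r = psums rho" by blast
  then show "r = rho" using psums_inj[of r rho] c1 assms(3) by blast
qed


lemma image_plus_iff: "(x::nat) \<in> (\<lambda>j. n + j) ` A \<longleftrightarrow> n \<le> x \<and> x - n \<in> A"
proof
  assume "x \<in> (\<lambda>j. n + j) ` A"
  then show "n \<le> x \<and> x - n \<in> A" by auto
next
  assume "n \<le> x \<and> x - n \<in> A"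
  then show "x \<in> (\<lambda>j. n + j) ` A"
    by (metis image_eqI le_add_diff_inverse)
qed

lemma setcompr_cong: "(\<And>i. i \<in> A \<Longrightarrow> F i = G i) \<Longrightarrow> {F i | i. i \<in> A} = {G i | i. i \<in> A}"
  by (intro Collect_cong) (auto, metis)

lemma block_rel_iff: "(x,y) \<in> block_rel P \<longleftrightarrow> (\<exists>B\<in>P. x \<in> B \<and> y \<in> B)"
  by (simp add: block_rel_def)

lemma block_rel_image: "(x,y) \<in> block_rel {F i | i. i \<in> A} \<longleftrightarrow> (\<exists>i\<in>A. x \<in> F i \<and> y \<in> F i)"
  by (auto simp: block_rel_def)

lemma shift_image: "(\<lambda>B. (\<lambda>x. x + n) ` B) ` {F i | i. i \<in> A} = {(\<lambda>x. x + n) ` F i | i. i \<in> A}"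
  by auto

lemma sym_block_rel: "sym (block_rel P)"
  by (auto simp: block_rel_def intro!: symI)

definition Rel :: "nat \<Rightarrow> nat set set \<Rightarrow> nat set set \<Rightarrow> (nat \<times> nat) set" where
  "Rel n P Q = (block_rel P \<union> block_rel ((\<lambda>B. (\<lambda>x. x + n) ` B) ` Q))\<^sup>*"

lemma Rel_sym: "sym (Rel n P Q)"
  unfolding Rel_def by (intro sym_rtrancl sym_Un sym_block_rel)

lemma Rel_trans: "trans (Rel n P Q)"
  unfolding Rel_def by (rule trans_rtrancl)

lemma Rel_stepL: "(x,y) \<in> block_rel P \<Longrightarrow> (x,y) \<in> Rel n P Q"
  unfolding Rel_def by auto

lemma Rel_stepR: "(x,y) \<in> block_rel ((\<lambda>B. (\<lambda>x. x + n) ` B) ` Q) \<Longrightarrow> (x,y) \<in> Rel n P Q"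
  unfolding Rel_def by auto

lemma Rel_trans': "(x,y) \<in> Rel n P Q \<Longrightarrow> (y,z) \<in> Rel n P Q \<Longrightarrow> (x,z) \<in> Rel n P Q"
  using Rel_trans by (meson transD)

lemma Rel_sym': "(x,y) \<in> Rel n P Q \<Longrightarrow> (y,x) \<in> Rel n P Q"
  using Rel_sym by (meson symD)

lemma closed_rtrancl:
  assumes "x \<in> S" "\<And>a b. a \<in> S \<Longrightarrow> (a,b) \<in> E \<Longrightarrow> b \<in> S"
  shows "E\<^sup>* `` {x} \<subseteq> S"
proof
  fix y assume "y \<in> E\<^sup>* `` {x}"
  then have "(x,y) \<in> E\<^sup>*" by simp
  then show "y \<in> S"
  proof (induction rule: rtrancl_induct)
    case base
    then show ?case using assms(1) .
  next
    case (step y z)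
    then show ?case using assms(2) by blast
  qed
qed

lemma Rel_closed:
  assumes "x \<in> S"
    "\<And>a b. a \<in> S \<Longrightarrow> (a,b) \<in> block_rel P \<Longrightarrow> b \<in> S"
    "\<And>a b. a \<in> S \<Longrightarrow> (a,b) \<in> block_rel ((\<lambda>B. (\<lambda>x. x + n) ` B) ` Q) \<Longrightarrow> b \<in> S"
  shows "Rel n P Q `` {x} \<subseteq> S"
  unfolding Rel_def
proof (rule closed_rtrancl)
  show "x \<in> S" by (rule assms(1))
next
  fix a b assume "a \<in> S" "(a, b) \<in> block_rel P \<union> block_rel ((\<lambda>B. (\<lambda>x. x + n) ` B) ` Q)"
  then show "b \<in> S" using assms(2,3) by blast
qed

lemma Rel_class:
  assumes "(i,x) \<in> Rel n P Q"
  shows "Rel n P Q `` {x} = Rel n P Q `` {i}"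
  using assms Rel_trans' Rel_sym' by blast

lemma concat_char:
  assumes hS: "\<And>i. i \<in> {1..n} \<Longrightarrow> Rel n P Q `` {i} = S i"
      and hb: "\<And>k. k \<in> {1..n} \<Longrightarrow> \<exists>i\<in>{1..n}. 2*n + k \<in> S i"
  shows "concat_part n P Q = {(\<lambda>x. if x \<le> n then x else x - n) ` (S i \<inter> ({1..n} \<union> {2*n+1..3*n})) | i. i \<in> {1..n}}"
proof -
  define g where "g = (\<lambda>x::nat. if x \<le> n then x else x - n)"
  define outer where "outer = {1..n} \<union> {2*n+1..3*n}"
  have c: "concat_part n P Q = {g ` (Rel n P Q `` {x} \<inter> outer) | x. x \<in> outer}"
    unfolding concat_part_def Let_def Rel_def g_def outer_def by simp
  have key: "\<exists>i\<in>{1..n}. Rel n P Q `` {x} = S i" if "x \<in> outer" for x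
  proof (cases "x \<le> n")
    case True
    then show ?thesis using that hS unfolding outer_def by auto
  next
    case False
    then have "x - 2*n \<in> {1..n}" using that unfolding outer_def by auto
    then obtain i where i: "i \<in> {1..n}" "2*n + (x - 2*n) \<in> S i" using hb by blast
    have "x = 2*n + (x - 2*n)" using False that unfolding outer_def by auto
    then have "x \<in> S i" using i(2) by simp
    then have "(i,x) \<in> Rel n P Q" using hS[OF i(1)] by (metis Image_singleton_iff)
    then show ?thesis using Rel_class hS i(1) by metis
  qed
  show ?thesis unfolding c g_def[symmetric] outer_def[symmetric]
  proof (intro equalityI subsetI)
    fix B assume "B \<in> {g ` (Rel n P Q `` {x} \<inter> outer) | x. x \<in> outer}"
    then obtain x where "x \<in> outer" "B = g ` (Rel n P Q `` {x} \<inter> outer)" by blast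
    moreover obtain j where "j \<in> {1..n}" "Rel n P Q `` {x} = S j" using key \<open>x \<in> outer\<close> by blast
    ultimately show "B \<in> {g ` (S i \<inter> outer) | i. i \<in> {1..n}}"
      by (intro CollectI exI[of _ j]) simp
  next
    fix B assume "B \<in> {g ` (S i \<inter> outer) | i. i \<in> {1..n}}"
    then obtain i where "i \<in> {1..n}" "B = g ` (S i \<inter> outer)" by blast
    moreover have "i \<in> outer" using \<open>i \<in> {1..n}\<close> unfolding outer_def by auto
    ultimately show "B \<in> {g ` (Rel n P Q `` {x} \<inter> outer) | x. x \<in> outer}" using hS
      by (intro CollectI exI[of _ i]) simp
  qed
qed


definition pp :: "nat \<Rightarrow> (nat \<Rightarrow> nat) \<Rightarrow> nat set set" where
  "pp n f = {{i, n + f i} | i. i \<in> {1..n}}"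

lemma one_part_pp: "one_part n = pp n (\<lambda>i. i)"
  by (simp add: one_part_def pp_def)

lemma pp_cong: "(\<And>i. i \<in> {1..n} \<Longrightarrow> f i = g i) \<Longrightarrow> pp n f = pp n g"
  unfolding pp_def by (metis (no_types, lifting))

lemma pp_eqD:
  assumes "pp n f = pp n g" "\<And>i. i \<in> {1..n} \<Longrightarrow> g i \<in> {1..n}" "\<And>i. i \<in> {1..n} \<Longrightarrow> f i \<in> {1..n}"
    "i \<in> {1..n}"
  shows "f i = g i"
proof -
  have "{i, n + f i} \<in> pp n g" using assms(1,4) unfolding pp_def by blast
  then obtain j where j: "j \<in> {1..n}" "{i, n + f i} = {j, n + g j}" unfolding pp_def by blast
  have "i \<in> {j, n + g j}" using j(2) by blast
  moreover have "n + g j \<noteq> i" using assms(2)[OF j(1)] assms(4) by auto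
  ultimately have "i = j" by blast
  have "n + f i \<in> {j, n + g j}" using j(2) by blast
  moreover have "n + f i \<noteq> j" using assms(3)[OF assms(4)] j(1) by auto
  ultimately show ?thesis using \<open>i = j\<close> by simp
qed

lemma concat_pp:
  assumes f: "bij_betw f {1..n} {1..n}" and g: "bij_betw g {1..n} {1..n}"
  shows "concat_part n (pp n f) (pp n g) = pp n (g \<circ> f)"
proof -
  have fr: "\<And>i. i \<in> {1..n} \<Longrightarrow> f i \<in> {1..n}" using f by (meson bij_betwE)
  have gr: "\<And>i. i \<in> {1..n} \<Longrightarrow> g i \<in> {1..n}" using g by (meson bij_betwE)
  have fi: "\<And>i j. i \<in> {1..n} \<Longrightarrow> j \<in> {1..n} \<Longrightarrow> f i = f j \<longleftrightarrow> i = j"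
    using f by (metis bij_betw_def inj_onD)
  have gi: "\<And>i j. i \<in> {1..n} \<Longrightarrow> j \<in> {1..n} \<Longrightarrow> g i = g j \<longleftrightarrow> i = j"
    using g by (metis bij_betw_def inj_onD)
  define S where "S i = {i, n + f i, 2*n + g (f i)}" for i
  have sh: "(\<lambda>B. (\<lambda>x. x + n) ` B) ` pp n g = {{j + n, n + g j + n} | j. j \<in> {1..n}}"
    unfolding pp_def shift_image by simp
  have hS: "Rel n (pp n f) (pp n g) `` {i} = S i" if i: "i \<in> {1..n}" for i
  proof
    show "Rel n (pp n f) (pp n g) `` {i} \<subseteq> S i"
    proof (rule Rel_closed)
      show "i \<in> S i" unfolding S_def by simp
    next
      fix a b assume a: "a \<in> S i" and ab: "(a, b) \<in> block_rel (pp n f)"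
      then obtain j where j: "j \<in> {1..n}" "a \<in> {j, n + f j}" "b \<in> {j, n + f j}"
        unfolding pp_def block_rel_image by blast
      have "j = i"
        using a j(1,2) fr[OF i] fr[OF j(1)] gr[OF fr[OF i]] fi[OF i j(1)] i unfolding S_def by auto
      then show "b \<in> S i" using j(3) unfolding S_def by auto
    next
      fix a b assume a: "a \<in> S i" and ab: "(a, b) \<in> block_rel ((\<lambda>B. (\<lambda>x. x + n) ` B) ` pp n g)"
      then obtain j where j: "j \<in> {1..n}" "a \<in> {j + n, n + g j + n}" "b \<in> {j + n, n + g j + n}"
        unfolding sh block_rel_image by blast
      have "j = f i"
        using a j(1,2) fr[OF i] gr[OF fr[OF i]] gr[OF j(1)] gi[OF fr[OF i] j(1)] i unfolding S_def by auto
      then show "b \<in> S i" using j(3) unfolding S_def by auto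
    qed
  next
    have 1: "(i, n + f i) \<in> Rel n (pp n f) (pp n g)"
      by (rule Rel_stepL) (unfold pp_def block_rel_image, use i in blast)
    have 2: "(n + f i, 2*n + g (f i)) \<in> Rel n (pp n f) (pp n g)"
      by (rule Rel_stepR) (unfold sh block_rel_image, rule bexI[of _ "f i"], use fr[OF i] in auto)
    have 0: "(i, i) \<in> Rel n (pp n f) (pp n g)" unfolding Rel_def by simp
    show "S i \<subseteq> Rel n (pp n f) (pp n g) `` {i}"
      unfolding S_def using 0 1 Rel_trans'[OF 1 2] by auto
  qed
  have hb: "\<exists>i\<in>{1..n}. 2*n + k \<in> S i" if k: "k \<in> {1..n}" for k
  proof -
    obtain j where j: "j \<in> {1..n}" "g j = k" using g k by (metis bij_betw_iff_bijections)
    obtain i where i: "i \<in> {1..n}" "f i = j" using f j(1) by (metis bij_betw_iff_bijections)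
    show ?thesis using i j unfolding S_def by auto
  qed
  have img: "(\<lambda>x. if x \<le> n then x else x - n) ` (S i \<inter> ({1..n} \<union> {2*n+1..3*n})) = {i, n + (g \<circ> f) i}"
    if i: "i \<in> {1..n}" for i
  proof -
    have "S i \<inter> ({1..n} \<union> {2*n+1..3*n}) = {i, 2*n + g (f i)}"
      using i fr[OF i] gr[OF fr[OF i]] unfolding S_def by auto
    moreover have "\<not> 2*n + g (f i) \<le> n" "i \<le> n" using i gr[OF fr[OF i]] by auto
    ultimately show ?thesis by (simp add: insert_commute)
  qed
  have c: "concat_part n (pp n f) (pp n g) = {(\<lambda>x. if x \<le> n then x else x - n) ` (S i \<inter> ({1..n} \<union> {2*n+1..3*n})) | i. i \<in> {1..n}}"
    by (rule concat_char[OF hS hb])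
  show ?thesis
    unfolding c unfolding pp_def by (rule setcompr_cong) (rule img)
qed

lemma pp_perm_part:
  assumes f: "bij_betw f {1..n} {1..n}"
  shows "perm_part n (pp n f)"
proof -
  have fr: "\<And>i. i \<in> {1..n} \<Longrightarrow> f i \<in> {1..n}" using f by (meson bij_betwE)
  have fi: "\<And>i j. i \<in> {1..n} \<Longrightarrow> j \<in> {1..n} \<Longrightarrow> f i = f j \<longleftrightarrow> i = j"
    using f by (metis bij_betw_def inj_onD)
  have un: "\<Union>(pp n f) = {1..2*n}"
  proof (intro equalityI subsetI)
    fix x assume "x \<in> \<Union>(pp n f)"
    then obtain i where "i \<in> {1..n}" "x \<in> {i, n + f i}" unfolding pp_def by blast
    then show "x \<in> {1..2*n}" using fr[of i] by auto
  next
    fix x assume x: "x \<in> {1..2*n}"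
    show "x \<in> \<Union>(pp n f)"
    proof (cases "x \<le> n")
      case True
      then have "{x, n + f x} \<in> pp n f" using x unfolding pp_def by auto
      then show ?thesis by blast
    next
      case False
      then have "x - n \<in> {1..n}" using x by auto
      then obtain i where i: "i \<in> {1..n}" "f i = x - n" using f by (metis bij_betw_iff_bijections)
      then have "{i, n + f i} \<in> pp n f" unfolding pp_def by auto
      moreover have "x = n + f i" using i False by auto
      ultimately show ?thesis by blast
    qed
  qed
  have dj: "disjnt p q" if pq: "p \<in> pp n f" "q \<in> pp n f" "p \<noteq> q" for p q
  proof -
    obtain i where i: "i \<in> {1..n}" "p = {i, n + f i}" using pq unfolding pp_def by blast
    obtain j where j: "j \<in> {1..n}" "q = {j, n + f j}" using pq unfolding pp_def by blast
    have "i \<noteq> j" using i j pq by blast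
    then have "f i \<noteq> f j" using fi i j by blast
    then show ?thesis using i j fr[OF i(1)] fr[OF j(1)] \<open>i \<noteq> j\<close> unfolding disjnt_def by auto
  qed
  have ne: "{} \<notin> pp n f" unfolding pp_def by auto
  have "set_part n (pp n f)" unfolding set_part_def by (rule partition_onI[OF un dj ne])
  moreover have "\<forall>B\<in>pp n f. \<exists>i\<in>{1..n}. \<exists>j\<in>{1..n}. B = {i, n+j}"
    unfolding pp_def using fr by blast
  ultimately show ?thesis unfolding perm_part_def by blast
qed

lemma part_unique: "partition_on A P \<Longrightarrow> B \<in> P \<Longrightarrow> C \<in> P \<Longrightarrow> x \<in> B \<Longrightarrow> x \<in> C \<Longrightarrow> B = C"
  unfolding partition_on_def disjoint_def pairwise_def disjnt_def by blast

lemma perm_part_pp: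
  assumes p: "perm_part n P"
  shows "\<exists>f. bij_betw f {1..n} {1..n} \<and> P = pp n f"
proof -
  have part: "partition_on {1..2*n} P"
    using p unfolding perm_part_def set_part_def by (rule conjunct1)
  have bl: "\<forall>B\<in>P. \<exists>i\<in>{1..n}. \<exists>j\<in>{1..n}. B = {i, n+j}"
    using p unfolding perm_part_def by (rule conjunct2)
  have ex: "\<exists>j\<in>{1..n}. {i, n + j} \<in> P" if i: "i \<in> {1..n}" for i
  proof -
    have "i \<in> {1..2*n}" using i by simp
    then have "i \<in> \<Union>P" by (simp only: partition_onD1[OF part, symmetric])
    then obtain B where B: "B \<in> P" "i \<in> B" by blast
    then obtain i' j where ij: "i' \<in> {1..n}" "j \<in> {1..n}" "B = {i', n + j}" using bl by blast
    then have "i = i'" using B(2) i by auto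
    then show ?thesis using ij B by blast
  qed
  have un: "j = j'" if "i \<in> {1..n}" "{i, n + j} \<in> P" "{i, n + j'} \<in> P" "j \<in> {1..n}" for i j j'
  proof -
    have "{i, n + j} = {i, n + j'}" using part_unique[OF part that(2,3), of i] by simp
    then have "n + j \<in> {i, n + j'}" by blast
    then show ?thesis using that(1,4) by auto
  qed
  define f where "f i = (SOME j. j \<in> {1..n} \<and> {i, n + j} \<in> P)" for i
  have fP: "f i \<in> {1..n} \<and> {i, n + f i} \<in> P" if "i \<in> {1..n}" for i
    unfolding f_def by (rule someI_ex) (use ex[OF that] in blast)
  have inj: "inj_on f {1..n}"
  proof (rule inj_onI)
    fix i i' assume i: "i \<in> {1..n}" "i' \<in> {1..n}" "f i = f i'"
    have "{i, n + f i} = {i', n + f i'}"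
      using part_unique[OF part conjunct2[OF fP[OF i(1)]] conjunct2[OF fP[OF i(2)]], of "n + f i"] i(3) by simp
    then have "i \<in> {i', n + f i'}" by blast
    then show "i = i'" using i fP[OF i(2)] by auto
  qed
  have "f ` {1..n} = {1..n}" by (rule endo_inj_surj) (use fP inj in auto)
  then have bij: "bij_betw f {1..n} {1..n}" using inj by (simp add: bij_betw_def)
  have "P = pp n f"
  proof (intro equalityI subsetI)
    fix B assume B: "B \<in> P"
    then obtain i j where ij: "i \<in> {1..n}" "j \<in> {1..n}" "B = {i, n + j}" using bl by blast
    then have "j = f i" using un[of i j "f i"] fP[OF ij(1)] B by blast
    then show "B \<in> pp n f" unfolding pp_def using ij by blast
  next
    fix B assume "B \<in> pp n f"
    then obtain i where "i \<in> {1..n}" "B = {i, n + f i}" unfolding pp_def by blast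
    then show "B \<in> P" using fP by blast
  qed
  then show ?thesis using bij by blast
qed

definition swp :: "nat \<Rightarrow> nat \<Rightarrow> nat \<Rightarrow> nat" where
  "swp j k x = (if x = j then k else if x = k then j else x)"

lemma swp_bij: "j \<in> A \<Longrightarrow> k \<in> A \<Longrightarrow> bij_betw (swp j k) A A"
  unfolding bij_betw_def inj_on_def swp_def
  by (auto simp: image_iff split: if_splits)

lemma id_bij: "bij_betw (\<lambda>i. i) A A"
  by (simp add: bij_betw_def)


definition colr :: "nat set \<Rightarrow> nat \<Rightarrow> nat \<Rightarrow> bool" where
  "colr E i j \<longleftrightarrow> (\<forall>e\<in>E. e < min i j \<or> max i j \<le> e)"

definition col :: "nat \<Rightarrow> nat \<Rightarrow> nat" where
  "col n x = (if x \<le> n then x else if x \<le> 2*n then x - n else x - 2*n)"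

definition blk :: "nat \<Rightarrow> nat set \<Rightarrow> nat \<Rightarrow> nat set" where
  "blk n E k = {x. 1 \<le> x \<and> x \<le> 2*n \<and> colr E k (col n x)}"

definition box :: "nat \<Rightarrow> nat set \<Rightarrow> nat set set" where
  "box n E = {blk n E k | k. k \<in> {1..n}}"

lemma colr_refl[simp]: "colr E i i"
  unfolding colr_def by auto

lemma colr_sym: "colr E i j \<Longrightarrow> colr E j i"
  unfolding colr_def by (simp add: min.commute max.commute)

lemma colr_trans: "colr E i j \<Longrightarrow> colr E j k \<Longrightarrow> colr E i k"
  unfolding colr_def
proof (intro ballI)
  fix e assume a: "\<forall>e\<in>E. e < min i j \<or> max i j \<le> e" "\<forall>e\<in>E. e < min j k \<or> max j k \<le> e" "e \<in> E"
  then have "e < min i j \<or> max i j \<le> e" "e < min j k \<or> max j k \<le> e" by auto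
  then show "e < min i k \<or> max i k \<le> e" unfolding min_def max_def by presburger
qed

lemma colr_mono: "D \<subseteq> E \<Longrightarrow> colr E i j \<Longrightarrow> colr D i j"
  unfolding colr_def by blast

lemma colr_le: "i \<le> j \<Longrightarrow> colr E i j \<longleftrightarrow> (\<forall>e\<in>E. \<not> (i \<le> e \<and> e < j))"
  unfolding colr_def by (auto simp: min_def max_def)

lemma col_low[simp]: "x \<le> n \<Longrightarrow> col n x = x"
  by (simp add: col_def)

lemma col_mid[simp]: "n < x \<Longrightarrow> x \<le> 2*n \<Longrightarrow> col n x = x - n"
  by (simp add: col_def)

lemma col_high[simp]: "2*n < x \<Longrightarrow> col n x = x - 2*n"
  by (simp add: col_def)

lemma col_range: "1 \<le> x \<Longrightarrow> x \<le> 3*n \<Longrightarrow> 1 \<le> col n x \<and> col n x \<le> n"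
  unfolding col_def by (simp split: if_split; arith)

lemma col_shift: "1 \<le> y \<Longrightarrow> y \<le> 2*n \<Longrightarrow> col n (y + n) = col n y"
  by (simp add: col_def)

lemma blk_mem: "x \<in> blk n E k \<longleftrightarrow> 1 \<le> x \<and> x \<le> 2*n \<and> colr E k (col n x)"
  by (simp add: blk_def)

lemma shift_blk_mem: "x \<in> (\<lambda>y. y + n) ` blk n E k \<longleftrightarrow> n + 1 \<le> x \<and> x \<le> 3*n \<and> colr E k (col n x)"
proof
  assume "x \<in> (\<lambda>y. y + n) ` blk n E k"
  then obtain y where y: "y \<in> blk n E k" "x = y + n" by blast
  then show "n + 1 \<le> x \<and> x \<le> 3*n \<and> colr E k (col n x)"
    using col_shift[of y n] by (auto simp: blk_mem)
next
  assume a: "n + 1 \<le> x \<and> x \<le> 3*n \<and> colr E k (col n x)"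
  then have "x - n \<in> blk n E k" using col_shift[of "x - n" n] by (auto simp: blk_mem)
  moreover have "x = (x - n) + n" using a by simp
  ultimately show "x \<in> (\<lambda>y. y + n) ` blk n E k" by blast
qed

lemma box_shift: "(\<lambda>B. (\<lambda>x. x + n) ` B) ` box n E = {(\<lambda>y. y + n) ` blk n E k | k. k \<in> {1..n}}"
  unfolding box_def by (rule shift_image)

lemma box_concat: "concat_part n (box n E) (box n E') = box n (E \<inter> E')"
proof -
  define D where "D = E \<inter> E'"
  define S where "S i = {x. 1 \<le> x \<and> x \<le> 3*n \<and> colr D i (col n x)}" for i
  let ?R = "Rel n (box n E) (box n E')"
  have adj: "(a, a + 1) \<in> ?R" if a: "1 \<le> a" "a + 1 \<le> n" "a \<notin> D" for a
  proof (cases "a \<in> E")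
    case False
    have "colr E a (a + 1)" unfolding colr_def
    proof
      fix e assume "e \<in> E" then have "e \<noteq> a" using False by auto
      then show "e < min a (a + 1) \<or> max a (a + 1) \<le> e" by auto
    qed
    then have "a \<in> blk n E a" "a + 1 \<in> blk n E a" using a by (auto simp: blk_mem)
    then have "(a, a + 1) \<in> block_rel (box n E)" unfolding box_def block_rel_image using a by auto
    then show ?thesis by (rule Rel_stepL)
  next
    case True
    then have nE': "a \<notin> E'" using a(3) unfolding D_def by blast
    have "a \<in> blk n E a" "n + a \<in> blk n E a" using a by (auto simp: blk_mem)
    then have 1: "(a, n + a) \<in> ?R" unfolding box_def
      by (intro Rel_stepL) (unfold block_rel_image, use a in auto)
    have "colr E' a (a + 1)" unfolding colr_def
    proof
      fix e assume "e \<in> E'" then have "e \<noteq> a" using nE' by auto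
      then show "e < min a (a + 1) \<or> max a (a + 1) \<le> e" by auto
    qed
    then have "n + a \<in> (\<lambda>y. y + n) ` blk n E' a" "n + a + 1 \<in> (\<lambda>y. y + n) ` blk n E' a"
      using a by (auto simp: shift_blk_mem)
    then have 2: "(n + a, n + a + 1) \<in> ?R"
      by (intro Rel_stepR) (unfold box_shift block_rel_image, use a in auto)
    have "a + 1 \<in> blk n E (a + 1)" "n + a + 1 \<in> blk n E (a + 1)" using a by (auto simp: blk_mem)
    then have 3: "(n + a + 1, a + 1) \<in> ?R" unfolding box_def
      by (intro Rel_stepL) (unfold block_rel_image, use a in auto)
    show ?thesis using Rel_trans'[OF Rel_trans'[OF 1 2] 3] .
  qed
  have path: "(i, i + d) \<in> ?R" if "1 \<le> i" "i + d \<le> n" "\<forall>e\<in>D. \<not> (i \<le> e \<and> e < i + d)" for i d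
    using that
  proof (induction d)
    case 0
    then show ?case unfolding Rel_def by simp
  next
    case (Suc d)
    have "\<forall>e\<in>D. \<not> (i \<le> e \<and> e < i + d)" using Suc.prems(3) by auto
    moreover have "i + d \<le> n" using Suc.prems(2) by simp
    ultimately have "(i, i + d) \<in> ?R" using Suc.IH Suc.prems(1) by blast
    moreover have "(i + d, i + d + 1) \<in> ?R" using Suc.prems by (intro adj) auto
    ultimately show ?case using Rel_trans' by simp
  qed
  have pathc: "(i, j) \<in> ?R" if "i \<in> {1..n}" "j \<in> {1..n}" "colr D i j" for i j
  proof (cases "i \<le> j")
    case True
    then have "(i, i + (j - i)) \<in> ?R" using that colr_le[OF True] by (intro path) auto
    then show ?thesis using True by simp
  next
    case False
    then have "(j, j + (i - j)) \<in> ?R" using that colr_le[of j i] colr_sym by (intro path) auto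
    then show ?thesis using False Rel_sym' by simp
  qed
  have tocol: "(col n x, x) \<in> ?R" if x: "1 \<le> x" "x \<le> 3*n" for x
  proof -
    consider "x \<le> n" | "n < x" "x \<le> 2*n" | "2*n < x" by linarith
    then show ?thesis
    proof cases
      case 1
      then show ?thesis unfolding Rel_def by simp
    next
      case 2
      have m: "x - n \<in> blk n E (x - n)" "x \<in> blk n E (x - n)" using 2 by (auto simp: blk_mem)
      have "(x - n, x) \<in> ?R" unfolding box_def
        by (intro Rel_stepL) (unfold block_rel_image, intro bexI[of _ "x - n"], use m 2 in auto)
      then show ?thesis using 2 by simp
    next
      case 3
      define j where "j = x - 2*n"
      have j: "1 \<le> j" "j \<le> n" "x = 2*n + j" using 3 x unfolding j_def by auto
      have "j \<in> blk n E j" "n + j \<in> blk n E j" using j by (auto simp: blk_mem)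
      then have 1: "(j, n + j) \<in> ?R" unfolding box_def
        by (intro Rel_stepL) (unfold block_rel_image, use j in auto)
      have "n + j \<in> (\<lambda>y. y + n) ` blk n E' j" "x \<in> (\<lambda>y. y + n) ` blk n E' j"
        using j by (auto simp: shift_blk_mem)
      then have 2: "(n + j, x) \<in> ?R"
        by (intro Rel_stepR) (unfold box_shift block_rel_image, use j in auto)
      show ?thesis using Rel_trans'[OF 1 2] j by simp
    qed
  qed
  have hS: "?R `` {i} = S i" if i: "i \<in> {1..n}" for i
  proof
    show "?R `` {i} \<subseteq> S i"
    proof (rule Rel_closed)
      show "i \<in> S i" unfolding S_def using i by auto
    next
      fix a b assume a: "a \<in> S i" and ab: "(a, b) \<in> block_rel (box n E)"
      then obtain k where k: "k \<in> {1..n}" "a \<in> blk n E k" "b \<in> blk n E k"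
        unfolding box_def block_rel_image by blast
      have k1: "colr E k (col n a)" "colr E k (col n b)" using k(2,3) by (simp_all add: blk_mem)
      have "colr E (col n a) (col n b)" by (rule colr_trans[OF colr_sym[OF k1(1)] k1(2)])
      then have c: "colr D (col n a) (col n b)" unfolding D_def by (rule colr_mono[rotated]) blast
      have "colr D i (col n a)" using a unfolding S_def by simp
      then have "colr D i (col n b)" using c by (rule colr_trans)
      then show "b \<in> S i" using k(3) unfolding S_def blk_mem by auto
    next
      fix a b assume a: "a \<in> S i" and ab: "(a, b) \<in> block_rel ((\<lambda>B. (\<lambda>x. x + n) ` B) ` box n E')"
      then obtain k where k: "k \<in> {1..n}" "a \<in> (\<lambda>y. y + n) ` blk n E' k" "b \<in> (\<lambda>y. y + n) ` blk n E' k"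
        unfolding box_shift block_rel_image by blast
      have k1: "colr E' k (col n a)" "colr E' k (col n b)" using k(2,3) by (simp_all add: shift_blk_mem)
      have "colr E' (col n a) (col n b)" by (rule colr_trans[OF colr_sym[OF k1(1)] k1(2)])
      then have c: "colr D (col n a) (col n b)" unfolding D_def by (rule colr_mono[rotated]) blast
      have "colr D i (col n a)" using a unfolding S_def by simp
      then have "colr D i (col n b)" using c by (rule colr_trans)
      then show "b \<in> S i" using k(3) unfolding S_def shift_blk_mem by auto
    qed
  next
    show "S i \<subseteq> ?R `` {i}"
    proof
      fix x assume x: "x \<in> S i"
      then have x1: "1 \<le> x" "x \<le> 3*n" "colr D i (col n x)" unfolding S_def by auto
      have "(i, col n x) \<in> ?R" using pathc[OF i _ x1(3)] col_range[OF x1(1,2)] by auto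
      then have "(i, x) \<in> ?R" using Rel_trans' tocol[OF x1(1,2)] by blast
      then show "x \<in> ?R `` {i}" by simp
    qed
  qed
  have hb: "\<exists>i\<in>{1..n}. 2*n + k \<in> S i" if k: "k \<in> {1..n}" for k
    using k unfolding S_def by (intro bexI[of _ k]) auto
  have img: "(\<lambda>x. if x \<le> n then x else x - n) ` (S i \<inter> ({1..n} \<union> {2*n+1..3*n})) = blk n D i"
    if i: "i \<in> {1..n}" for i
  proof (intro equalityI subsetI)
    fix x assume "x \<in> (\<lambda>x. if x \<le> n then x else x - n) ` (S i \<inter> ({1..n} \<union> {2*n+1..3*n}))"
    then obtain y where y: "y \<in> S i" "y \<in> {1..n} \<union> {2*n+1..3*n}" "x = (if y \<le> n then y else y - n)"
      by blast
    show "x \<in> blk n D i"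
    proof (cases "y \<le> n")
      case True
      then show ?thesis using y unfolding S_def blk_mem by auto
    next
      case False
      then have "2*n < y" "y \<le> 3*n" "x = y - n" using y by auto
      moreover have "col n (y - n) = col n y"
      proof -
        have "col n (y - n) = y - n - n" using \<open>2*n < y\<close> \<open>y \<le> 3*n\<close> by (intro col_mid) auto
        moreover have "col n y = y - 2*n" using \<open>2*n < y\<close> by (rule col_high)
        ultimately show ?thesis by simp
      qed
      ultimately show ?thesis using y unfolding S_def blk_mem by auto
    qed
  next
    fix x assume x: "x \<in> blk n D i"
    show "x \<in> (\<lambda>x. if x \<le> n then x else x - n) ` (S i \<inter> ({1..n} \<union> {2*n+1..3*n}))"
    proof (cases "x \<le> n")
      case True
      then have "x \<in> S i \<inter> ({1..n} \<union> {2*n+1..3*n})" using x unfolding S_def blk_mem by auto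
      then show ?thesis using True by force
    next
      case False
      have c: "col n (x + n) = col n x" using x False by (intro col_shift) (auto simp: blk_mem)
      then have "x + n \<in> S i \<inter> ({1..n} \<union> {2*n+1..3*n})" using x False unfolding S_def blk_mem by auto
      moreover have "x = (if x + n \<le> n then x + n else x + n - n)" using False by simp
      ultimately show ?thesis by blast
    qed
  qed
  have c: "concat_part n (box n E) (box n E') = {(\<lambda>x. if x \<le> n then x else x - n) ` (S i \<inter> ({1..n} \<union> {2*n+1..3*n})) | i. i \<in> {1..n}}"
    by (rule concat_char[OF hS hb])
  show ?thesis
    unfolding c unfolding box_def D_def[symmetric] by (rule setcompr_cong) (rule img)
qed


lemma colr_via: "colr E k a \<Longrightarrow> colr E k b \<Longrightarrow> colr E a b"
  using colr_sym colr_trans by blast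

lemma blk_low: "blk n E k \<inter> {1..n} = {j. 1 \<le> j \<and> j \<le> n \<and> colr E k j}"
  by (auto simp: blk_mem)

lemma box_partition:
  assumes "1 \<le> n"
  shows "set_part n (box n E)"
  unfolding set_part_def
proof (rule partition_onI)
  show "\<Union>(box n E) = {1..2*n}"
  proof (intro equalityI subsetI)
    fix x assume "x \<in> \<Union>(box n E)"
    then show "x \<in> {1..2*n}" unfolding box_def by (auto simp: blk_mem)
  next
    fix x assume x: "x \<in> {1..2*n}"
    then have c: "1 \<le> col n x \<and> col n x \<le> n" using col_range[of x n] by auto
    have "x \<in> blk n E (col n x)" using x by (auto simp: blk_mem)
    then show "x \<in> \<Union>(box n E)" unfolding box_def using c by auto
  qed
next
  fix p q assume p: "p \<in> box n E" and q: "q \<in> box n E" and pq: "p \<noteq> q"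
  obtain k where k: "k \<in> {1..n}" "p = blk n E k" using p unfolding box_def by blast
  obtain k' where k': "k' \<in> {1..n}" "q = blk n E k'" using q unfolding box_def by blast
  show "disjnt p q"
  proof (rule ccontr)
    assume "\<not> disjnt p q"
    then obtain x where "x \<in> blk n E k" "x \<in> blk n E k'" using k k' unfolding disjnt_def by blast
    then have "colr E k (col n x)" "colr E k' (col n x)" by (auto simp: blk_mem)
    then have kk: "colr E k k'" using colr_via[of E "col n x" k k'] colr_sym by blast
    have "blk n E k = blk n E k'"
    proof (intro equalityI subsetI)
      fix y assume "y \<in> blk n E k"
      then show "y \<in> blk n E k'" using kk colr_sym colr_trans unfolding blk_mem by blast
    next
      fix y assume "y \<in> blk n E k'"
      then show "y \<in> blk n E k" using kk colr_sym colr_trans unfolding blk_mem by blast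
    qed
    then show False using pq k k' by simp
  qed
next
  show "{} \<notin> box n E"
  proof
    assume "{} \<in> box n E"
    then obtain k where k: "k \<in> {1..n}" "{} = blk n E k" unfolding box_def by blast
    have "k \<in> blk n E k" using k(1) by (auto simp: blk_mem)
    then show False using k(2) by simp
  qed
qed

lemma box_finer: "finer (one_part n) (box n E)"
  unfolding finer_def
proof
  fix B assume "B \<in> box n E"
  then obtain k where k: "k \<in> {1..n}" "B = blk n E k" unfolding box_def by blast
  define S where "S = {{j, n + j} | j. j \<in> {1..n} \<and> colr E k j}"
  have "S \<subseteq> one_part n" unfolding S_def one_part_def by blast
  moreover have "B = \<Union>S"
  proof (intro equalityI subsetI)
    fix x assume "x \<in> B"
    then have x: "1 \<le> x" "x \<le> 2*n" "colr E k (col n x)" using k by (auto simp: blk_mem)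
    have r: "1 \<le> col n x \<and> col n x \<le> n" using col_range[of x n] x by auto
    have "x \<in> {col n x, n + col n x}"
      using x by (cases "x \<le> n") auto
    moreover have "{col n x, n + col n x} \<in> S" unfolding S_def using r x(3) by auto
    ultimately show "x \<in> \<Union>S" by blast
  next
    fix x assume "x \<in> \<Union>S"
    then obtain j where j: "j \<in> {1..n}" "colr E k j" "x \<in> {j, n + j}" unfolding S_def by blast
    then show "x \<in> B" using k by (auto simp: blk_mem)
  qed
  ultimately show "\<exists>S\<subseteq>one_part n. B = \<Union>S" by blast
qed

lemma box_interval:
  assumes k: "k \<in> {1..n}"
  shows "\<exists>a b. blk n E k \<inter> {1..n} = {a..b}"
proof -
  define T where "T = {j. 1 \<le> j \<and> j \<le> n \<and> colr E k j}"
  have fin: "finite T" unfolding T_def by (rule finite_subset[of _ "{..n}"]) auto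
  have ne: "k \<in> T" unfolding T_def using k by auto
  then have ne': "T \<noteq> {}" by blast
  have aT: "Min T \<in> T" and bT: "Max T \<in> T" using fin ne' by auto
  have "T = {Min T..Max T}"
  proof (intro equalityI subsetI)
    fix y assume yT: "y \<in> T"
    have "Min T \<le> y" by (rule Min_le[OF fin yT])
    moreover have "y \<le> Max T" by (rule Max_ge[OF fin yT])
    ultimately show "y \<in> {Min T..Max T}" by (rule atLeastAtMost_iff[THEN iffD2, OF conjI])
  next
    fix y assume y: "y \<in> {Min T..Max T}"
    have ab: "colr E (Min T) (Max T)"
    proof (rule colr_via[of E k])
      show "colr E k (Min T)" using aT unfolding T_def by simp
      show "colr E k (Max T)" using bT unfolding T_def by simp
    qed
    have le: "Min T \<le> Max T" using y by auto
    have "colr E (Min T) y"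
      using colr_le[OF le, of E] colr_le[of "Min T" y E] y ab by auto
    moreover have "colr E k (Min T)" using aT unfolding T_def by simp
    ultimately have "colr E k y" using colr_trans by blast
    moreover have "1 \<le> y" "y \<le> n" using y aT bT unfolding T_def by auto
    ultimately show "y \<in> T" unfolding T_def by auto
  qed
  then show ?thesis unfolding blk_low T_def[symmetric] by blast
qed

lemma box_boxed: "1 \<le> n \<Longrightarrow> boxed n (box n E)"
  unfolding boxed_def using box_partition box_finer box_interval unfolding box_def by blast

definition ends :: "nat \<Rightarrow> nat set set \<Rightarrow> nat set" where
  "ends n J = {Max (B \<inter> {1..n}) | B. B \<in> J}"

lemma colr_step:
  assumes "m \<notin> E" shows "colr E m (m + 1)"
  unfolding colr_def
proof
  fix e assume "e \<in> E" then have "e \<noteq> m" using assms by auto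
  then show "e < min m (m + 1) \<or> max m (m + 1) \<le> e" by auto
qed

lemma ends_box:
  assumes n: "1 \<le> n"
  shows "ends n (box n E) = (E \<inter> {1..<n}) \<union> {n}"
proof -
  define T where "T k = {j. 1 \<le> j \<and> j \<le> n \<and> colr E k j}" for k
  have finT: "finite (T k)" for k unfolding T_def by (rule finite_subset[of _ "{..n}"]) auto
  have eb: "ends n (box n E) = {Max (T k) | k. k \<in> {1..n}}"
  proof -
    have "ends n (box n E) = {Max (blk n E k \<inter> {1..n}) | k. k \<in> {1..n}}"
      unfolding ends_def box_def by blast
    also have "\<dots> = {Max (T k) | k. k \<in> {1..n}}"
      unfolding blk_low T_def by simp
    finally show ?thesis .
  qed
  have sub: "Max (T k) \<in> (E \<inter> {1..<n}) \<union> {n}" if k: "k \<in> {1..n}" for k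
  proof -
    have kT: "k \<in> T k" unfolding T_def using k by auto
    define m where "m = Max (T k)"
    have mT: "m \<in> T k" unfolding m_def using finT kT by (intro Max_in) auto
    show ?thesis
    proof (cases "m = n")
      case True
      then show ?thesis unfolding m_def by simp
    next
      case False
      then have mn: "m < n" "1 \<le> m" using mT unfolding T_def by auto
      have "m \<in> E"
      proof (rule ccontr)
        assume "m \<notin> E"
        then have "colr E m (m + 1)" by (rule colr_step)
        moreover have "colr E k m" using mT unfolding T_def by simp
        ultimately have "colr E k (m + 1)" using colr_trans by blast
        then have "m + 1 \<in> T k" unfolding T_def using mn by auto
        then have "m + 1 \<le> m" unfolding m_def using finT by (intro Max_ge) auto
        then show False by simp
      qed
      then show ?thesis using mn unfolding m_def by auto
    qed
  qed
  have sup1: "Max (T n) = n"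
  proof (rule Max_eqI)
    show "finite (T n)" by (rule finT)
    show "n \<in> T n" unfolding T_def using n by auto
    show "\<And>y. y \<in> T n \<Longrightarrow> y \<le> n" unfolding T_def by auto
  qed
  have sup2: "Max (T e) = e" if e: "e \<in> E" "1 \<le> e" "e < n" for e
  proof (rule Max_eqI)
    show "finite (T e)" by (rule finT)
    show "e \<in> T e" unfolding T_def using e by auto
  next
    fix y assume y: "y \<in> T e"
    show "y \<le> e"
    proof (rule ccontr)
      assume "\<not> y \<le> e"
      then have "e < y" by simp
      moreover have "colr E e y" using y unfolding T_def by simp
      ultimately show False using e(1) unfolding colr_def by auto
    qed
  qed
  show ?thesis
  proof (intro equalityI subsetI)
    fix x assume "x \<in> ends n (box n E)"
    then show "x \<in> (E \<inter> {1..<n}) \<union> {n}" unfolding eb using sub by blast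
  next
    fix x assume x: "x \<in> (E \<inter> {1..<n}) \<union> {n}"
    show "x \<in> ends n (box n E)"
    proof (cases "x = n")
      case True
      then show ?thesis unfolding eb using sup1 n by (auto intro!: exI[of _ n])
    next
      case False
      then have "x \<in> E" "1 \<le> x" "x < n" using x by auto
      then show ?thesis unfolding eb using sup2[of x] by (auto intro!: exI[of _ x])
    qed
  qed
qed


lemma boxed_eq_box:
  assumes b: "boxed n J"
  shows "J = box n (ends n J)"
proof -
  define E where "E = ends n J"
  have part: "partition_on {1..2*n} J" using b unfolding boxed_def set_part_def by blast
  have fin: "finer (one_part n) J" using b unfolding boxed_def by blast
  have intv: "\<forall>B\<in>J. \<exists>a b. B \<inter> {1..n} = {a..b}" using b unfolding boxed_def by blast
  have sub: "B \<subseteq> {1..2*n}" if "B \<in> J" for B using partition_onD1[OF part] that by blast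
  have F1: "j \<in> B \<longleftrightarrow> n + j \<in> B" if B: "B \<in> J" and j: "j \<in> {1..n}" for B j
  proof -
    obtain S where S: "S \<subseteq> one_part n" "B = \<Union>S" using fin B unfolding finer_def by blast
    show ?thesis
    proof
      assume "j \<in> B"
      then obtain s where s: "s \<in> S" "j \<in> s" using S by blast
      then obtain i where i: "i \<in> {1..n}" "s = {i, n+i}" using S(1) unfolding one_part_def by blast
      then have "i = j" using s(2) j by auto
      then show "n + j \<in> B" using s(1) i S(2) by blast
    next
      assume "n + j \<in> B"
      then obtain s where s: "s \<in> S" "n + j \<in> s" using S by blast
      then obtain i where i: "i \<in> {1..n}" "s = {i, n+i}" using S(1) unfolding one_part_def by blast
      then have "i = j" using s(2) j by auto
      then show "j \<in> B" using s(1) i S(2) by blast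
    qed
  qed
  have F0: "x \<in> B \<longleftrightarrow> col n x \<in> B" if B: "B \<in> J" and x: "x \<in> {1..2*n}" for B x
  proof (cases "x \<le> n")
    case True
    then show ?thesis by simp
  next
    case False
    then have xn: "x - n \<in> {1..n}" and e: "n + (x - n) = x" and c: "col n x = x - n" using x by auto
    show ?thesis using F1[OF B xn] unfolding e c by simp
  qed
  have finB: "finite (B \<inter> {1..n})" for B by simp
  have ne: "B \<inter> {1..n} \<noteq> {}" if B: "B \<in> J" for B
  proof -
    have "B \<noteq> {}" using partition_onD3[OF part] B by blast
    then obtain x where x: "x \<in> B" by blast
    then have x2: "x \<in> {1..2*n}" using sub B by blast
    then have "col n x \<in> B" using F0[OF B x2] x by simp
    moreover have "1 \<le> col n x \<and> col n x \<le> n" using col_range[of x n] x2 by auto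
    ultimately show ?thesis by auto
  qed
  have MaxE: "Max (B \<inter> {1..n}) \<in> E" if "B \<in> J" for B unfolding E_def ends_def using that by blast
  have MaxB: "Max (B \<inter> {1..n}) \<in> B \<inter> {1..n}" if "B \<in> J" for B
    using Max_in[OF finB ne[OF that]] .
  have Up: "j' \<in> B" if B: "B \<in> J" and j: "j \<in> B" "j \<in> {1..n}" and jj: "j \<le> j'" "j' \<le> n" "colr E j j'" for B j j'
  proof -
    define b where "b = Max (B \<inter> {1..n})"
    have bE: "b \<in> E" unfolding b_def using MaxE[OF B] .
    have jb: "j \<le> b" unfolding b_def using j by (intro Max_ge) auto
    have "j' \<le> b"
    proof (rule ccontr)
      assume "\<not> j' \<le> b"
      then have "min j j' \<le> b" "b < max j j'" using jj jb by auto
      then show False using jj(3) bE unfolding colr_def by force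
    qed
    obtain a c where ac: "B \<inter> {1..n} = {a..c}" using intv B by blast
    have "j \<in> B \<inter> {1..n}" using j by blast
    then have "a \<le> j" unfolding ac by simp
    moreover have "b \<le> c" using MaxB[OF B] ac unfolding b_def by auto
    ultimately have "j' \<in> {a..c}" using jj \<open>j' \<le> b\<close> by auto
    then show ?thesis using ac by blast
  qed
  have F3: "j' \<in> B \<longleftrightarrow> colr E j j'" if B: "B \<in> J" and j: "j \<in> B" "j \<in> {1..n}" and j': "j' \<in> {1..n}" for B j j'
  proof
    assume j'B: "j' \<in> B"
    show "colr E j j'" unfolding colr_def
    proof
      fix e assume eE: "e \<in> E"
      show "e < min j j' \<or> max j j' \<le> e"
      proof (rule ccontr)
        assume "\<not> (e < min j j' \<or> max j j' \<le> e)"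
        then have e1: "min j j' \<le> e" "e < max j j'" by auto
        obtain B' where B': "B' \<in> J" "e = Max (B' \<inter> {1..n})" using eE unfolding E_def ends_def by blast
        have eB': "e \<in> B'" using MaxB[OF B'(1)] B'(2) by blast
        obtain a c where ac: "B \<inter> {1..n} = {a..c}" using intv B by blast
        have "j \<in> B \<inter> {1..n}" "j' \<in> B \<inter> {1..n}" using j j' j'B by blast+
        then have "j \<in> {a..c}" "j' \<in> {a..c}" unfolding ac by simp_all
        then have "e \<in> {a..c}" using e1 by auto
        then have "e \<in> B" using ac by blast
        then have "B = B'" using part_unique[OF part B B'(1) _ eB'] by blast
        then have "e = Max (B \<inter> {1..n})" using B'(2) by simp
        moreover have "max j j' \<in> B \<inter> {1..n}" using j j' j'B by (auto simp: max_def)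
        ultimately have "max j j' \<le> e" using finB by (metis Max_ge)
        then show False using e1 by linarith
      qed
    qed
  next
    assume c: "colr E j j'"
    show "j' \<in> B"
    proof (cases "j \<le> j'")
      case True
      then show ?thesis using Up[OF B j True _ c] j' by auto
    next
      case False
      have "j' \<in> {1..2*n}" using j' by auto
      then obtain B'' where B'': "B'' \<in> J" "j' \<in> B''" using partition_onD1[OF part] by blast
      have "j \<in> B''" using Up[OF B''(1) B''(2) j' _ _ colr_sym[OF c]] False j by auto
      then have "B'' = B" using part_unique[OF part B''(1) B] j by blast
      then show ?thesis using B'' by simp
    qed
  qed
  have blkeq: "B = blk n E k" if B: "B \<in> J" and k: "k \<in> B" "k \<in> {1..n}" for B k
  proof (intro equalityI subsetI)
    fix x assume x: "x \<in> B"
    then have x2: "x \<in> {1..2*n}" using sub B by blast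
    then have cB: "col n x \<in> B" using F0[OF B x2] x by simp
    have cr: "col n x \<in> {1..n}" using col_range[of x n] x2 by auto
    have "colr E k (col n x)" using F3[OF B k cr] cB by simp
    then show "x \<in> blk n E k" using x2 by (auto simp: blk_mem)
  next
    fix x assume x: "x \<in> blk n E k"
    then have x2: "x \<in> {1..2*n}" and c: "colr E k (col n x)" by (auto simp: blk_mem)
    have cr: "col n x \<in> {1..n}" using col_range[of x n] x2 by auto
    have "col n x \<in> B" using F3[OF B k cr] c by simp
    then show "x \<in> B" using F0[OF B x2] by simp
  qed
  have "J = box n E"
  proof (intro equalityI subsetI)
    fix B assume B: "B \<in> J"
    then obtain k where k: "k \<in> B" "k \<in> {1..n}" using ne by blast
    then show "B \<in> box n E" unfolding box_def using blkeq[OF B k] by blast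
  next
    fix B assume "B \<in> box n E"
    then obtain k where k: "k \<in> {1..n}" "B = blk n E k" unfolding box_def by blast
    have "k \<in> {1..2*n}" using k by auto
    then obtain B' where B': "B' \<in> J" "k \<in> B'" using partition_onD1[OF part] by blast
    then have "B' = B" using blkeq[OF B'(1) B'(2) k(1)] k(2) by simp
    then show "B \<in> J" using B' by simp
  qed
  then show ?thesis unfolding E_def .
qed

lemma colr_restrict:
  assumes "i \<in> {1..n}" "j \<in> {1..n}"
  shows "colr E i j \<longleftrightarrow> colr (E \<inter> {1..<n}) i j"
proof
  assume "colr E i j" then show "colr (E \<inter> {1..<n}) i j" by (rule colr_mono[rotated]) blast
next
  assume c: "colr (E \<inter> {1..<n}) i j"
  show "colr E i j" unfolding colr_def
  proof
    fix e assume e: "e \<in> E"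
    show "e < min i j \<or> max i j \<le> e"
    proof (cases "e \<in> {1..<n}")
      case True then show ?thesis using c e unfolding colr_def by blast
    next
      case False
      then have "e = 0 \<or> n \<le> e" by auto
      then show ?thesis using assms by auto
    qed
  qed
qed

lemma box_cong:
  assumes "E \<inter> {1..<n} = E' \<inter> {1..<n}"
  shows "box n E = box n E'"
proof -
  have "blk n E k = blk n E' k" if k: "k \<in> {1..n}" for k
  proof -
    have "colr E k (col n x) = colr E' k (col n x)" if x: "1 \<le> x" "x \<le> 2*n" for x
    proof -
      have cr: "col n x \<in> {1..n}" using col_range[of x n] x by auto
      show ?thesis using colr_restrict[OF k cr, of E] colr_restrict[OF k cr, of E'] assms by simp
    qed
    then show ?thesis unfolding blk_def by blast
  qed
  then show ?thesis unfolding box_def by (rule setcompr_cong)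
qed

lemma blk_eq:
  assumes k: "k \<in> {1..n}" and F: "F \<subseteq> {1..n}" and c: "\<And>j. j \<in> {1..n} \<Longrightarrow> colr E k j \<longleftrightarrow> j \<in> F"
  shows "blk n E k = F \<union> (\<lambda>j. n + j) ` F"
proof (intro equalityI subsetI)
  fix x assume x: "x \<in> blk n E k"
  then have x2: "1 \<le> x" "x \<le> 2*n" and cc: "colr E k (col n x)" by (auto simp: blk_mem)
  have cr: "col n x \<in> {1..n}" using col_range[of x n] x2 by auto
  have cF: "col n x \<in> F" using c[OF cr] cc by simp
  show "x \<in> F \<union> (\<lambda>j. n + j) ` F"
  proof (cases "x \<le> n")
    case True then show ?thesis using cF by simp
  next
    case False
    then have "x = n + col n x" using x2 by simp
    then show ?thesis using cF by blast
  qed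
next
  fix x assume x: "x \<in> F \<union> (\<lambda>j. n + j) ` F"
  then show "x \<in> blk n E k"
  proof
    assume xF: "x \<in> F"
    then have "x \<in> {1..n}" using F by blast
    then show ?thesis using c xF by (auto simp: blk_mem)
  next
    assume "x \<in> (\<lambda>j. n + j) ` F"
    then obtain j where j: "j \<in> F" "x = n + j" by blast
    then have jn: "j \<in> {1..n}" using F by blast
    then have "col n x = j" using j by simp
    then show ?thesis using c jn j by (auto simp: blk_mem)
  qed
qed

lemma one_part_box: "one_part n = box n {1..n}"
proof -
  have "blk n {1..n} k = {k, n + k}" if k: "k \<in> {1..n}" for k
  proof -
    have "colr {1..n} k j \<longleftrightarrow> j \<in> {k}" if j: "j \<in> {1..n}" for j
    proof
      assume c: "colr {1..n} k j"
      show "j \<in> {k}"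
      proof (rule ccontr)
        assume "j \<notin> {k}"
        then have "min k j < max k j" by auto
        moreover have "min k j \<in> {1..n}" using j k by (auto simp: min_def)
        moreover have "min k j < min k j \<or> max k j \<le> min k j"
          using c \<open>min k j \<in> {1..n}\<close> unfolding colr_def by blast
        ultimately show False by linarith
      qed
    next
      assume "j \<in> {k}" then show "colr {1..n} k j" by simp
    qed
    then have "blk n {1..n} k = {k} \<union> (\<lambda>j. n + j) ` {k}" using k by (intro blk_eq) auto
    then show ?thesis by (simp add: insert_commute)
  qed
  then show ?thesis unfolding one_part_def box_def by (intro setcompr_cong[symmetric]) (simp add: add.commute)
qed

lemma b_part_box:
  assumes i: "1 \<le> i" "i < n"
  shows "b_part n i = box n ({1..n} - {i})"
proof -
  define E where "E = {1..n} - {i}"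
  have a: "colr E k j \<longleftrightarrow> j = k" if k: "k \<in> {1..n}" "k \<noteq> i" "k \<noteq> i + 1" and j: "j \<in> {1..n}" for k j
  proof
    assume c: "colr E k j"
    show "j = k"
    proof (rule ccontr)
      assume jk: "j \<noteq> k"
      show False
      proof (cases "k < j")
        case True
        have "k \<in> E" using k unfolding E_def by auto
        then have "k < min k j \<or> max k j \<le> k" using c unfolding colr_def by blast
        then show False using True by linarith
      next
        case False
        then have jk': "j < k" using jk by auto
        show False
        proof (cases "j = i")
          case True
          then have "i + 1 < k" using jk' k by auto
          moreover have "i + 1 \<in> E" using i unfolding E_def by auto
          moreover have "i + 1 < min k j \<or> max k j \<le> i + 1" using c \<open>i + 1 \<in> E\<close> unfolding colr_def by blast
          ultimately show False using True jk' by linarith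
        next
          case False
          then have "j \<in> E" using j unfolding E_def by auto
          then have "j < min k j \<or> max k j \<le> j" using c unfolding colr_def by blast
          then show False using jk' by linarith
        qed
      qed
    qed
  next
    assume "j = k" then show "colr E k j" by simp
  qed
  have ii: "colr E i (i + 1)" by (rule colr_step) (simp add: E_def)
  have b: "colr E k j \<longleftrightarrow> j \<in> {i, i + 1}" if k: "k \<in> {i, i + 1}" and j: "j \<in> {1..n}" for k j
  proof
    assume c: "colr E k j"
    show "j \<in> {i, i + 1}"
    proof (rule ccontr)
      assume "j \<notin> {i, i + 1}"
      moreover have "k \<in> {1..n}" using k i by auto
      ultimately have "k = j" using a[of j k] j colr_sym[OF c] by auto
      then show False using k \<open>j \<notin> {i, i + 1}\<close> by simp
    qed
  next
    assume "j \<in> {i, i + 1}"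
    then show "colr E k j" using k ii colr_sym by auto
  qed
  define big where "big = {i, i + 1, n + i, n + i + 1}"
  have blk_big: "blk n E k = big" if k: "k \<in> {i, i + 1}" for k
  proof -
    have "blk n E k = {i, i + 1} \<union> (\<lambda>j. n + j) ` {i, i + 1}"
      using k i b[OF k] by (intro blk_eq) auto
    then show ?thesis unfolding big_def by auto
  qed
  have blk_one: "blk n E k = {k, n + k}" if k: "k \<in> {1..n}" "k \<notin> {i, i + 1}" for k
  proof -
    have "blk n E k = {k} \<union> (\<lambda>j. n + j) ` {k}"
      using k a[of k] by (intro blk_eq) auto
    then show ?thesis by (simp add: insert_commute)
  qed
  have "b_part n i = box n E"
  proof (intro equalityI subsetI)
    fix B assume B: "B \<in> b_part n i"
    show "B \<in> box n E"
    proof (cases "B = big")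
      case True
      then have "B = blk n E i" using blk_big by simp
      then show ?thesis unfolding box_def using i by auto
    next
      case False
      then have "B \<in> one_part n" "B \<noteq> {i, n + i}" "B \<noteq> {i + 1, n + i + 1}"
        using B unfolding b_part_def big_def by auto
      then obtain k where k: "k \<in> {1..n}" "B = {k, n + k}" unfolding one_part_def by blast
      have "k \<noteq> i" using k \<open>B \<noteq> {i, n + i}\<close> by auto
      moreover have "k \<noteq> i + 1" using k \<open>B \<noteq> {i + 1, n + i + 1}\<close> by auto
      ultimately have "B = blk n E k" using blk_one k by simp
      then show ?thesis unfolding box_def using k by auto
    qed
  next
    fix B assume "B \<in> box n E"
    then obtain k where k: "k \<in> {1..n}" "B = blk n E k" unfolding box_def by blast
    show "B \<in> b_part n i"
    proof (cases "k \<in> {i, i + 1}")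
      case True
      then have "B = big" using blk_big k by simp
      then show ?thesis unfolding b_part_def big_def by simp
    next
      case False
      then have "B = {k, n + k}" using blk_one k by simp
      moreover have "{k, n + k} \<in> one_part n" using k unfolding one_part_def by blast
      moreover have "{k, n + k} \<noteq> {i, n + i}" "{k, n + k} \<noteq> {i + 1, n + i + 1}"
        using False k i by (auto simp: doubleton_eq_iff)
      ultimately show ?thesis unfolding b_part_def by auto
    qed
  qed
  then show ?thesis unfolding E_def .
qed

lemma finer_full:
  assumes "set_part n P"
  shows "finer P (box n {})"
  unfolding finer_def
proof
  fix B assume "B \<in> box n {}"
  then obtain k where "B = blk n {} k" unfolding box_def by blast
  then have "B = {1..2*n}" unfolding blk_def colr_def by auto
  also have "\<dots> = \<Union>P" using assms unfolding set_part_def by (simp add: partition_onD1)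
  finally show "\<exists>S\<subseteq>P. B = \<Union>S" by blast
qed


lemma sum_Max_psums: "pos mu \<Longrightarrow> mu \<noteq> [] \<Longrightarrow> sum_list mu = Max (psums mu)"
proof -
  assume "mu \<noteq> []"
  then have "sum_list mu \<in> psums mu" by (rule psums_sum)
  moreover have "finite (psums mu)" by (induction mu) auto
  ultimately show ?thesis using psums_le by (intro Max_eqI[symmetric]) auto
qed

lemma boxed_ends:
  assumes n: "1 \<le> n" and b: "boxed n J"
  shows "ends n J = (ends n J \<inter> {1..<n}) \<union> {n}"
proof -
  have "ends n J = ends n (box n (ends n J))" using boxed_eq_box[OF b] by simp
  also have "\<dots> = (ends n J \<inter> {1..<n}) \<union> {n}" by (rule ends_box[OF n])
  finally show ?thesis .
qed

lemma ends_props: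
  assumes n: "1 \<le> n" and b: "boxed n J"
  shows "n \<in> ends n J" "ends n J \<subseteq> {1..n}" "finite (ends n J)" "0 \<notin> ends n J"
proof -
  have e: "ends n J = (ends n J \<inter> {1..<n}) \<union> {n}" by (rule boxed_ends[OF n b])
  show "n \<in> ends n J" using n by (subst e) simp
  show s: "ends n J \<subseteq> {1..n}" using n by (subst e) auto
  show "finite (ends n J)" using s finite_subset by blast
  show "0 \<notin> ends n J" using s by auto
qed

lemma comp_of_comp:
  assumes n: "1 \<le> n" and E: "n \<in> E" "E \<subseteq> {1..n}"
  shows "comp_of E \<in> compositions n" "psums (comp_of E) = E" "pos (comp_of E)"
proof -
  have f: "finite E" using E finite_subset by blast
  have z: "0 \<notin> E" using E by auto
  show ps: "psums (comp_of E) = E" and p: "pos (comp_of E)" using comp_of[OF f z] by auto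
  have "comp_of E \<noteq> []" using ps E by auto
  then have "sum_list (comp_of E) = Max E" using sum_Max_psums[OF p] ps by simp
  also have "\<dots> = n" using E f by (intro Max_eqI) auto
  finally show "comp_of E \<in> compositions n" using p unfolding compositions_def pos_def by simp
qed

lemma concat_one: "concat_part n (one_part n) (one_part n) = one_part n"
  unfolding one_part_pp using concat_pp[OF id_bij id_bij] by (simp add: comp_def)

lemma concat_boxed:
  assumes "boxed n J" "boxed n K"
  shows "concat_part n J K = box n (ends n J \<inter> ends n K)"
  using box_concat boxed_eq_box[OF assms(1)] boxed_eq_box[OF assms(2)] by metis

lemma concat_boxed_boxed:
  assumes "1 \<le> n" "boxed n J" "boxed n K"
  shows "boxed n (concat_part n J K)"
  using concat_boxed[OF assms(2,3)] box_boxed[OF assms(1)] by simp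

lemma one_BR: "1 \<le> n \<Longrightarrow> boxed n J \<Longrightarrow> (one_part n, J) \<in> BR n"
  unfolding BR_def using pp_perm_part[OF id_bij] one_part_pp boxed_def by auto

lemma center_part:
  assumes n: "3 \<le> n"
  shows "BR_center n = {(one_part n, J) | J. boxed n J}"
proof (intro equalityI subsetI)
  fix x assume x: "x \<in> BR_center n"
  then have xBR: "x \<in> BR n" and com: "\<forall>y\<in>BR n. BR_mult n x y = BR_mult n y x"
    unfolding BR_center_def by auto
  obtain P J where xPJ: "x = (P, J)" by (cases x)
  have pP: "perm_part n P" and bJ: "boxed n J" using xBR xPJ unfolding BR_def by auto
  obtain f where f: "bij_betw f {1..n} {1..n}" "P = pp n f" using perm_part_pp[OF pP] by blast
  have fr: "\<And>i. i \<in> {1..n} \<Longrightarrow> f i \<in> {1..n}" using f by (meson bij_betwE)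
  have fid: "f i = i" if i: "i \<in> {1..n}" for i
  proof (rule ccontr)
    assume fi: "f i \<noteq> i"
    define j where "j = f i"
    have j: "j \<in> {1..n}" unfolding j_def using fr[OF i] .
    obtain k where k: "k \<in> {1..n}" "k \<noteq> i" "k \<noteq> j"
    proof -
      have "\<exists>k\<in>{1..n}. k \<noteq> i \<and> k \<noteq> j"
      proof (cases "1 \<noteq> i \<and> 1 \<noteq> j")
        case True then show ?thesis using n by (intro bexI[of _ 1]) auto
      next
        case False
        show ?thesis
        proof (cases "2 \<noteq> i \<and> 2 \<noteq> j")
          case True then show ?thesis using n by (intro bexI[of _ 2]) auto
        next
          case False2: False
          then show ?thesis using n False by (intro bexI[of _ 3]) auto
        qed
      qed
      then show ?thesis using that by blast
    qed
    define g where "g = swp j k"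
    have g: "bij_betw g {1..n} {1..n}" unfolding g_def using j k by (intro swp_bij)
    have gr: "\<And>i. i \<in> {1..n} \<Longrightarrow> g i \<in> {1..n}" using g by (meson bij_betwE)
    have pg: "perm_part n (pp n g)" by (rule pp_perm_part[OF g])
    have "set_part n (pp n g)" using pg unfolding perm_part_def by blast
    then have "(pp n g, box n {}) \<in> BR n"
      unfolding BR_def using pg box_boxed[of n "{}"] n finer_full by auto
    then have "BR_mult n x (pp n g, box n {}) = BR_mult n (pp n g, box n {}) x" using com by blast
    then have "concat_part n P (pp n g) = concat_part n (pp n g) P"
      unfolding BR_mult_def xPJ by simp
    then have "pp n (g \<circ> f) = pp n (f \<circ> g)" using concat_pp f g by metis
    then have "(g \<circ> f) i = (f \<circ> g) i"
      by (rule pp_eqD) (use i fr gr in auto)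
    moreover have "g (f i) = k" unfolding g_def swp_def j_def by simp
    moreover have "g i = i" unfolding g_def swp_def using fi k j_def by auto
    ultimately show False using k j_def by simp
  qed
  have "P = one_part n" unfolding f(2) one_part_pp by (rule pp_cong) (rule fid)
  then show "x \<in> {(one_part n, J) | J. boxed n J}" using xPJ bJ by blast
next
  fix x assume "x \<in> {(one_part n, J) | J. boxed n J}"
  then obtain J where xJ: "x = (one_part n, J)" "boxed n J" by blast
  have "x \<in> BR n" using xJ one_BR n by simp
  moreover have "BR_mult n x y = BR_mult n y x" if y: "y \<in> BR n" for y
  proof -
    obtain P K where yPK: "y = (P, K)" by (cases y)
    have pP: "perm_part n P" and bK: "boxed n K" using y yPK unfolding BR_def by auto
    obtain f where f: "bij_betw f {1..n} {1..n}" "P = pp n f" using perm_part_pp[OF pP] by blast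
    have "concat_part n (one_part n) P = P"
      unfolding one_part_pp f(2) using concat_pp[OF id_bij f(1)] by (simp add: comp_def)
    moreover have "concat_part n P (one_part n) = P"
      unfolding one_part_pp f(2) using concat_pp[OF f(1) id_bij] by (simp add: comp_def)
    moreover have "concat_part n J K = concat_part n K J"
      using concat_boxed[OF xJ(2) bK] concat_boxed[OF bK xJ(2)] by (simp add: Int_commute)
    ultimately show ?thesis unfolding BR_mult_def xJ(1) yPK by simp
  qed
  ultimately show "x \<in> BR_center n" unfolding BR_center_def by blast
qed

lemma gen_part:
  assumes n: "3 \<le> n"
  shows "{(one_part n, J) | J. boxed n J} = gen_submonoid n"
proof (intro equalityI subsetI)
  fix x assume "x \<in> {(one_part n, J) | J. boxed n J}"
  then obtain J where xJ: "x = (one_part n, J)" "boxed n J" by blast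
  have step: "(one_part n, box n ({1..n} - A)) \<in> gen_submonoid n" if "finite A" "A \<subseteq> {1..<n}" for A
    using that
  proof (induction A rule: finite_induct)
    case empty
    then show ?case using gen_one one_part_box by simp
  next
    case (insert a A)
    then have IH: "(one_part n, box n ({1..n} - A)) \<in> gen_submonoid n" by simp
    have a: "1 \<le> a" "a \<le> n - 1" "a < n" using insert by auto
    have e: "e_gen n a \<in> gen_submonoid n" using a by (intro gen_e)
    have "BR_mult n (one_part n, box n ({1..n} - A)) (e_gen n a)
        = (one_part n, box n (({1..n} - A) \<inter> ({1..n} - {a})))"
      unfolding BR_mult_def e_gen_def b_part_box[OF a(1) a(3)] using concat_one box_concat by simp
    moreover have "({1..n} - A) \<inter> ({1..n} - {a}) = {1..n} - insert a A" by auto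
    ultimately show ?case using gen_mult[OF IH e] by simp
  qed
  have "box n ({1..n} - ({1..<n} - ends n J)) = box n (ends n J)"
    by (rule box_cong) auto
  then show "x \<in> gen_submonoid n"
    using step[of "{1..<n} - ends n J"] boxed_eq_box[OF xJ(2)] xJ(1) by auto
next
  fix x assume "x \<in> gen_submonoid n"
  then show "x \<in> {(one_part n, J) | J. boxed n J}"
  proof (induction rule: gen_submonoid.induct)
    case gen_one
    then show ?case using box_boxed[of n "{1..n}"] one_part_box n by auto
  next
    case (gen_e i)
    then show ?case unfolding e_gen_def using b_part_box[of i n] box_boxed[of n] n by auto
  next
    case (gen_mult x y)
    then obtain J K where "x = (one_part n, J)" "boxed n J" "y = (one_part n, K)" "boxed n K" by blast
    then show ?case unfolding BR_mult_def using concat_one concat_boxed_boxed n by auto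
  qed
qed

lemma iso_part:
  assumes n: "3 \<le> n"
  shows "(BR_monoid n)\<lparr>carrier := {(one_part n, J) | J. boxed n J}\<rparr> \<cong> comp_monoid n"
proof -
  let ?X = "{(one_part n, J) | J. boxed n J}"
  define h where "h x = comp_of (ends n (snd x))" for x :: "nat set set \<times> nat set set"
  have n1: "1 \<le> n" using n by simp
  have hc: "h x \<in> compositions n" if "x \<in> ?X" for x
    using that ends_props[OF n1] comp_of_comp[OF n1] unfolding h_def by auto
  have hom: "h (BR_mult n x y) = comp_join (h x) (h y)" if x: "x \<in> ?X" and y: "y \<in> ?X" for x y
  proof -
    obtain J K where J: "x = (one_part n, J)" "boxed n J" and K: "y = (one_part n, K)" "boxed n K"
      using x y by blast
    define EJ where "EJ = ends n J"
    define EK where "EK = ends n K"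
    have pJ: "n \<in> EJ" "EJ \<subseteq> {1..n}" unfolding EJ_def using ends_props[OF n1 J(2)] by auto
    have pK: "n \<in> EK" "EK \<subseteq> {1..n}" unfolding EK_def using ends_props[OF n1 K(2)] by auto
    have "snd (BR_mult n x y) = box n (EJ \<inter> EK)"
      unfolding BR_mult_def J(1) K(1) EJ_def EK_def using concat_boxed[OF J(2) K(2)] by simp
    then have "ends n (snd (BR_mult n x y)) = ((EJ \<inter> EK) \<inter> {1..<n}) \<union> {n}"
      using ends_box[OF n1] by simp
    also have "\<dots> = EJ \<inter> EK" using pJ pK by auto
    finally have hxy: "h (BR_mult n x y) = comp_of (EJ \<inter> EK)" unfolding h_def by simp
    have cJ: "comp_of EJ \<in> compositions n" "psums (comp_of EJ) = EJ" "pos (comp_of EJ)"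
      using comp_of_comp[OF n1 pJ] by auto
    have cK: "comp_of EK \<in> compositions n" "psums (comp_of EK) = EK" "pos (comp_of EK)"
      using comp_of_comp[OF n1 pK] by auto
    have cJK: "comp_of (EJ \<inter> EK) \<in> compositions n" "psums (comp_of (EJ \<inter> EK)) = EJ \<inter> EK"
        "pos (comp_of (EJ \<inter> EK))"
      using comp_of_comp[OF n1, of "EJ \<inter> EK"] pJ pK by auto
    have "comp_join (comp_of EJ) (comp_of EK) = comp_of (EJ \<inter> EK)"
      using cJ cK cJK unfolding compositions_def by (intro comp_join_eq) auto
    then show ?thesis using hxy unfolding h_def J(1) K(1) EJ_def EK_def by simp
  qed
  have inj: "inj_on h ?X"
  proof (rule inj_onI)
    fix x y assume x: "x \<in> ?X" and y: "y \<in> ?X" and e: "h x = h y"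
    obtain J K where J: "x = (one_part n, J)" "boxed n J" and K: "y = (one_part n, K)" "boxed n K"
      using x y by blast
    have "psums (h x) = ends n J" unfolding h_def J(1)
      using comp_of_comp[OF n1] ends_props[OF n1 J(2)] by simp
    moreover have "psums (h y) = ends n K" unfolding h_def K(1)
      using comp_of_comp[OF n1] ends_props[OF n1 K(2)] by simp
    ultimately have "ends n J = ends n K" using e by simp
    then have "J = K" using boxed_eq_box[OF J(2)] boxed_eq_box[OF K(2)] by simp
    then show "x = y" using J K by simp
  qed
  have surj: "h ` ?X = compositions n"
  proof (intro equalityI subsetI)
    fix m assume "m \<in> h ` ?X"
    then show "m \<in> compositions n" using hc by blast
  next
    fix m assume m: "m \<in> compositions n"
    then have pm: "pos m" "sum_list m = n" unfolding compositions_def pos_def by auto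
    have mne: "m \<noteq> []" using pm n by auto
    define E where "E = psums m"
    have E: "n \<in> E" "E \<subseteq> {1..n}"
      unfolding E_def using psums_sum[OF mne] pm psums_pos[OF pm(1)] psums_le[of _ m]
      by (auto simp: Suc_le_eq)
    have bb: "boxed n (box n E)" by (rule box_boxed[OF n1])
    have "ends n (box n E) = (E \<inter> {1..<n}) \<union> {n}" by (rule ends_box[OF n1])
    also have "\<dots> = E" using E by auto
    finally have "h (one_part n, box n E) = comp_of E" unfolding h_def by simp
    moreover have "comp_of E = m"
    proof (rule psums_inj)
      show "pos (comp_of E)" using comp_of_comp[OF n1 E] by simp
      show "pos m" by (rule pm(1))
      show "psums (comp_of E) = psums m" using comp_of_comp[OF n1 E] unfolding E_def by simp
    qed
    moreover have "(one_part n, box n E) \<in> ?X" using bb by blast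
    ultimately have "m = h (one_part n, box n E)" "(one_part n, box n E) \<in> ?X" by simp_all
    then show "m \<in> h ` ?X" by (rule image_eqI)
  qed
  have "h \<in> iso ((BR_monoid n)\<lparr>carrier := ?X\<rparr>) (comp_monoid n)"
  proof (rule isoI)
    show "h \<in> hom ((BR_monoid n)\<lparr>carrier := ?X\<rparr>) (comp_monoid n)"
      unfolding hom_def BR_monoid_def comp_monoid_def using hc hom by auto
    show "bij_betw h (carrier ((BR_monoid n)\<lparr>carrier := ?X\<rparr>)) (carrier (comp_monoid n))"
      unfolding BR_monoid_def comp_monoid_def bij_betw_def using inj surj by simp
  qed
  then show ?thesis by (rule is_isoI)
qed

theorem proposition5p16:
  fixes n :: nat
  assumes "n \<ge> 3"
  shows "BR_center n = {(one_part n, J) | J. boxed n J}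
     \<and> {(one_part n, J) | J. boxed n J} = gen_submonoid n
     \<and> (BR_monoid n)\<lparr>carrier := {(one_part n, J) | J. boxed n J}\<rparr> \<cong> comp_monoid n"
  using center_part[OF assms] gen_part[OF assms] iso_part[OF assms] by blast

end
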